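(* Let $\mathfrak g$ be a finite-dimensional perm algebra, $N$ a Nijenhuis operator on $\mathfrak g$, and $\mathfrak B$ a nondegenerate, skew-symmetric, invariant bilinear form on $\mathfrak g$ (so $(\mathfrak g,N,\mathfrak B)$ is a skew-symmetric NF perm algebra). Let $\widehat N$ be the adjoint of $N$ with respect to $\mathfrak B$, i.e. $\mathfrak B(N(x),y)=\mathfrak B(x,\widehat N(y))$ for all $x,y$. Then $(\mathfrak g^*,R^*-L^*,R^*,\widehat N^* )$ is a representation of $(\mathfrak g,N)$, and it is equivalent to the adjoint representation $(\mathfrak g,L,R,N)$, i.e. there is a linear isomorphism $\psi:\mathfrak g\to\mathfrak g^*$ with $\psi(xy)=(R^*-L^* )(x)\psi(y)$, $\psi(yx)=\psi(y)R^*(x)$ and $\psi(N(x))=\widehat N^*(\psi(x))$ for all $x,y$. Conversely, let $(\mathfrak g,N)$ be a finite-dimensional Nijenhuis perm algebra and $S:\mathfrak g\to\mathfrak g$ a linear map admissible to $(\mathfrak g,N)$; if the representation $(\mathfrak g^*,R^*-L^*,R^*,S^* )$ of $(\mathfrak g,N)$ is equivalent to $(\mathfrak g,L,R,N)$, then there is a nondegenerate invariant bilinear form $\mathfrak B$ on $\mathfrak g$ such that $(\mathfrak g,N,\mathfrak B)$ is an NF perm algebra with $\widehat N=S$.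
   Context: Over a field $K$. A (right) perm algebra: bilinear product with $(xy)z=x(yz)=x(zy)$; $L(x)y=xy$, $R(x)y=yx$. A representation $(V,\ell,r)$: linear $\ell,r:\mathfrak g\to\mathrm{End}(V)$, written $\ell(x)v$, $v\,r(x)$, with $v\,r(xy)=(v\,r(x))r(y)=(v\,r(y))r(x)$ and $\ell(xy)v=\ell(x)(\ell(y)v)=\ell(x)(v\,r(y))=(\ell(x)v)r(y)$. $(\mathfrak g,L,R)$ is a representation, with right action $y\,R(x)=yx$. Nijenhuis operator: $N(x)N(y)+N^2(xy)=N(N(x)y)+N(xN(y))$. A representation of $(\mathfrak g,N)$: $(V,\ell,r,\alpha)$ with $\ell(N(x))\alpha(v)+\alpha^2(\ell(x)v)=\alpha(\ell(N(x))v)+\alpha(\ell(x)\alpha(v))$ and $\alpha(v)r(N(x))+\alpha^2(v\,r(x))=\alpha(v\,r(N(x)))+\alpha(\alpha(v)r(x))$; $(\mathfrak g,L,R,N)$ is one. Dual maps: $\langle L^*(x)\xi,y\rangle=\langle\xi,xy\rangle$, $\langle\xi R^*(x),y\rangle=\langle\xi,yx\rangle$; in $(\mathfrak g^*,R^*-L^*,R^* )$ the left action is $(R^*-L^* )(x)\xi=\xi R^*(x)-L^*(x)\xi$ and the right action is $\xi R^*(x)$. $S^*$ is the dual map of $S$. A bilinear form $\mathfrak B$ on $\mathfrak g$ is invariant if $\mathfrak B(xy,z)=\mathfrak B(y,zx)-\mathfrak B(y,xz)$ for all $x,y,z$. An NF (Nijenhuis Frobenius) perm algebra is $(\mathfrak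 g,N,\mathfrak B)$ with $N$ a Nijenhuis operator and $\mathfrak B$ nondegenerate invariant. A linear $S:\mathfrak g\to\mathfrak g$ is admissible to $(\mathfrak g,N)$ if for all $x,y$: $S(N(x)y)+xS^2(y)-N(x)S(y)-S(xS(y))=0$ and $S(xN(y))+S^2(x)y-S(x)N(y)-S(S(x)y)=0$. *)

theory Defs
  imports "HOL-Analysis.Analysis"
begin

text \<open>The perm algebra g is modelled as K^n, i.e. the type 'k^'n with 'k a field and
 'n a finite index type.\<close>

definition lin_map :: "('k::field^'n \<Rightarrow> 'k^'n) \<Rightarrow> bool" where
  "lin_map f \<longleftrightarrow> Vector_Spaces.linear (*s) (*s) f"

definition lin_functional :: "('k::field^'n \<Rightarrow> 'k) \<Rightarrow> bool" where
  "lin_functional f \<longleftrightarrow> Vector_Spaces.linear (*s) (*) f"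

definition dual_space :: "('k::field^'n \<Rightarrow> 'k) set" where
  "dual_space = {\<xi>. lin_functional \<xi>}"

definition bilinear_prod :: "('k::field^'n \<Rightarrow> 'k^'n \<Rightarrow> 'k^'n) \<Rightarrow> bool" where
  "bilinear_prod m \<longleftrightarrow> (\<forall>x. lin_map (m x)) \<and> (\<forall>y. lin_map (\<lambda>x. m x y))"

definition perm_algebra :: "('k::field^'n \<Rightarrow> 'k^'n \<Rightarrow> 'k^'n) \<Rightarrow> bool" where
  "perm_algebra m \<longleftrightarrow> bilinear_prod m \<and>
     (\<forall>x y z. m (m x y) z = m x (m y z) \<and> m x (m y z) = m x (m z y))"

definition nijenhuis :: "('k::field^'n \<Rightarrow> 'k^'n \<Rightarrow> 'k^'n) \<Rightarrow> ('k^'n \<Rightarrow> 'k^'n) \<Rightarrow> bool" where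
  "nijenhuis m N \<longleftrightarrow> lin_map N \<and>
     (\<forall>x y. m (N x) (N y) + N (N (m x y)) = N (m (N x) y) + N (m x (N y)))"

definition bilinear_form :: "('k::field^'n \<Rightarrow> 'k^'n \<Rightarrow> 'k) \<Rightarrow> bool" where
  "bilinear_form B \<longleftrightarrow> (\<forall>x. lin_functional (B x)) \<and> (\<forall>y. lin_functional (\<lambda>x. B x y))"

definition nondegenerate :: "('k::field^'n \<Rightarrow> 'k^'n \<Rightarrow> 'k) \<Rightarrow> bool" where
  "nondegenerate B \<longleftrightarrow> (\<forall>x. (\<forall>y. B x y = 0) \<longrightarrow> x = 0) \<and> (\<forall>y. (\<forall>x. B x y = 0) \<longrightarrow> y = 0)"

definition skew_symmetric :: "('k::field^'n \<Rightarrow> 'k^'n \<Rightarrow> 'k) \<Rightarrow> bool" where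
  "skew_symmetric B \<longleftrightarrow> (\<forall>x y. B x y = - B y x)"

definition invariant_form :: "('k::field^'n \<Rightarrow> 'k^'n \<Rightarrow> 'k^'n) \<Rightarrow> ('k^'n \<Rightarrow> 'k^'n \<Rightarrow> 'k) \<Rightarrow> bool" where
  "invariant_form m B \<longleftrightarrow> (\<forall>x y z. B (m x y) z = B y (m z x) - B y (m x z))"

definition NF_perm_algebra ::
  "('k::field^'n \<Rightarrow> 'k^'n \<Rightarrow> 'k^'n) \<Rightarrow> ('k^'n \<Rightarrow> 'k^'n) \<Rightarrow> ('k^'n \<Rightarrow> 'k^'n \<Rightarrow> 'k) \<Rightarrow> bool" where
  "NF_perm_algebra m N B \<longleftrightarrow> perm_algebra m \<and> nijenhuis m N \<and> bilinear_form B \<and>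
     nondegenerate B \<and> invariant_form m B"

definition admissible ::
  "('k::field^'n \<Rightarrow> 'k^'n \<Rightarrow> 'k^'n) \<Rightarrow> ('k^'n \<Rightarrow> 'k^'n) \<Rightarrow> ('k^'n \<Rightarrow> 'k^'n) \<Rightarrow> bool" where
  "admissible m N S \<longleftrightarrow>
     (\<forall>x y. S (m (N x) y) + m x (S (S y)) - m (N x) (S y) - S (m x (S y)) = 0 \<and>
            S (m x (N y)) + m (S (S x)) y - m (S x) (N y) - S (m (S x) y) = 0)"

text \<open>Representation (V, l, r) of the perm algebra g on a vector space V given as a
 carrier set W inside a type 'w with addition add and scalar multiplication sc;
 l x v is the left action, r x v is the right action v r(x).\<close>
definition perm_rep ::
  "('w \<Rightarrow> 'w \<Rightarrow> 'w) \<Rightarrow> ('k::field \<Rightarrow> 'w \<Rightarrow> 'w) \<Rightarrow> 'w set \<Rightarrow>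
   ('k^'n \<Rightarrow> 'k^'n \<Rightarrow> 'k^'n) \<Rightarrow> ('k^'n \<Rightarrow> 'w \<Rightarrow> 'w) \<Rightarrow> ('k^'n \<Rightarrow> 'w \<Rightarrow> 'w) \<Rightarrow> bool" where
  "perm_rep add sc W m l r \<longleftrightarrow>
     (\<forall>x. \<forall>v\<in>W. l x v \<in> W \<and> r x v \<in> W) \<and>
     (\<forall>x. \<forall>v\<in>W. \<forall>w\<in>W. l x (add v w) = add (l x v) (l x w) \<and> r x (add v w) = add (r x v) (r x w)) \<and>
     (\<forall>x c. \<forall>v\<in>W. l x (sc c v) = sc c (l x v) \<and> r x (sc c v) = sc c (r x v)) \<and>
     (\<forall>x y. \<forall>v\<in>W. l (x + y) v = add (l x v) (l y v) \<and> r (x + y) v = add (r x v) (r y v)) \<and>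
     (\<forall>x c. \<forall>v\<in>W. l (c *s x) v = sc c (l x v) \<and> r (c *s x) v = sc c (r x v)) \<and>
     (\<forall>x y. \<forall>v\<in>W. r (m x y) v = r y (r x v) \<and> r y (r x v) = r x (r y v)) \<and>
     (\<forall>x y. \<forall>v\<in>W. l (m x y) v = l x (l y v) \<and> l x (l y v) = l x (r y v) \<and>
                    l x (r y v) = r y (l x v))"

definition nij_perm_rep ::
  "('w \<Rightarrow> 'w \<Rightarrow> 'w) \<Rightarrow> ('k::field \<Rightarrow> 'w \<Rightarrow> 'w) \<Rightarrow> 'w set \<Rightarrow>
   ('k^'n \<Rightarrow> 'k^'n \<Rightarrow> 'k^'n) \<Rightarrow> ('k^'n \<Rightarrow> 'k^'n) \<Rightarrow>
   ('k^'n \<Rightarrow> 'w \<Rightarrow> 'w) \<Rightarrow> ('k^'n \<Rightarrow> 'w \<Rightarrow> 'w) \<Rightarrow> ('w \<Rightarrow> 'w) \<Rightarrow> bool" where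
  "nij_perm_rep add sc W m N l r \<alpha> \<longleftrightarrow>
     perm_rep add sc W m l r \<and>
     (\<forall>v\<in>W. \<alpha> v \<in> W) \<and>
     (\<forall>v\<in>W. \<forall>w\<in>W. \<alpha> (add v w) = add (\<alpha> v) (\<alpha> w)) \<and>
     (\<forall>c. \<forall>v\<in>W. \<alpha> (sc c v) = sc c (\<alpha> v)) \<and>
     (\<forall>x. \<forall>v\<in>W. add (l (N x) (\<alpha> v)) (\<alpha> (\<alpha> (l x v))) = add (\<alpha> (l (N x) v)) (\<alpha> (l x (\<alpha> v)))) \<and>
     (\<forall>x. \<forall>v\<in>W. add (r (N x) (\<alpha> v)) (\<alpha> (\<alpha> (r x v))) = add (\<alpha> (r (N x) v)) (\<alpha> (r x (\<alpha> v))))"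

definition dual_add :: "('k::field^'n \<Rightarrow> 'k) \<Rightarrow> ('k^'n \<Rightarrow> 'k) \<Rightarrow> ('k^'n \<Rightarrow> 'k)" where
  "dual_add \<xi> \<eta> = (\<lambda>v. \<xi> v + \<eta> v)"

definition dual_scale :: "'k::field \<Rightarrow> ('k^'n \<Rightarrow> 'k) \<Rightarrow> ('k^'n \<Rightarrow> 'k)" where
  "dual_scale c \<xi> = (\<lambda>v. c * \<xi> v)"

definition Lstar :: "('k::field^'n \<Rightarrow> 'k^'n \<Rightarrow> 'k^'n) \<Rightarrow> 'k^'n \<Rightarrow> ('k^'n \<Rightarrow> 'k) \<Rightarrow> ('k^'n \<Rightarrow> 'k)" where
  "Lstar m x \<xi> = (\<lambda>y. \<xi> (m x y))"

definition Rstar :: "('k::field^'n \<Rightarrow> 'k^'n \<Rightarrow> 'k^'n) \<Rightarrow> 'k^'n \<Rightarrow> ('k^'n \<Rightarrow> 'k) \<Rightarrow> ('k^'n \<Rightarrow> 'k)" where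
  "Rstar m x \<xi> = (\<lambda>y. \<xi> (m y x))"

definition RLstar :: "('k::field^'n \<Rightarrow> 'k^'n \<Rightarrow> 'k^'n) \<Rightarrow> 'k^'n \<Rightarrow> ('k^'n \<Rightarrow> 'k) \<Rightarrow> ('k^'n \<Rightarrow> 'k)" where
  "RLstar m x \<xi> = (\<lambda>y. Rstar m x \<xi> y - Lstar m x \<xi> y)"

definition dual_map :: "('k::field^'n \<Rightarrow> 'k^'n) \<Rightarrow> ('k^'n \<Rightarrow> 'k) \<Rightarrow> ('k^'n \<Rightarrow> 'k)" where
  "dual_map S \<xi> = (\<lambda>y. \<xi> (S y))"

definition equiv_to_adjoint ::
  "('k::field^'n \<Rightarrow> 'k^'n \<Rightarrow> 'k^'n) \<Rightarrow> ('k^'n \<Rightarrow> 'k^'n) \<Rightarrow> ('k^'n \<Rightarrow> 'k^'n) \<Rightarrow> bool" where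
  "equiv_to_adjoint m N S \<longleftrightarrow>
     (\<exists>\<psi> :: 'k^'n \<Rightarrow> ('k^'n \<Rightarrow> 'k).
        (\<forall>x y. \<psi> (x + y) = dual_add (\<psi> x) (\<psi> y)) \<and>
        (\<forall>c x. \<psi> (c *s x) = dual_scale c (\<psi> x)) \<and>
        bij_betw \<psi> UNIV dual_space \<and>
        (\<forall>x y. \<psi> (m x y) = RLstar m x (\<psi> y) \<and> \<psi> (m y x) = Rstar m x (\<psi> y) \<and>
               \<psi> (N x) = dual_map S (\<psi> x)))"

end

theory Submission
  imports Defs
begin

lemma vs_field: "vector_space ((*)::'k::field \<Rightarrow> 'k \<Rightarrow> 'k)"
  by unfold_locales (auto simp: algebra_simps)

lemma lf_iff: "lin_functional (f::'k::field^'n \<Rightarrow> 'k) \<longleftrightarrow>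
   (\<forall>x y. f (x + y) = f x + f y) \<and> (\<forall>c x. f (c *s x) = c * f x)"
  unfolding lin_functional_def Vector_Spaces.linear_iff using vec.vector_space_axioms vs_field by blast

lemma lm_iff: "lin_map (f::'k::field^'n \<Rightarrow> 'k^'n) \<longleftrightarrow>
   (\<forall>x y. f (x + y) = f x + f y) \<and> (\<forall>c x. f (c *s x) = c *s f x)"
  unfolding lin_map_def Vector_Spaces.linear_iff using vec.vector_space_axioms by blast

lemma lf_add: "lin_functional f \<Longrightarrow> f (x + y) = f x + f y" by (simp add: lf_iff)
lemma lf_scale: "lin_functional f \<Longrightarrow> f (c *s x) = c * f x" by (simp add: lf_iff)
lemma lf_zero: "lin_functional f \<Longrightarrow> f 0 = 0"
  using lf_scale[of f 0 0] by simp
lemma lf_diff: "lin_functional f \<Longrightarrow> f (x - y) = f x - f y"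
  using lf_add[of f "x - y" y] by simp

lemma lf_sum: assumes "lin_functional f" "finite A" shows "f (sum g A) = (\<Sum>i\<in>A. f (g i))"
  using assms(2) by (induction A rule: finite_induct) (auto simp: lf_zero[OF assms(1)] lf_add[OF assms(1)])

lemma lf_basis: "lin_functional f \<Longrightarrow> f v = (\<Sum>i\<in>UNIV. v$i * f (axis i 1))"
proof -
  assume f: "lin_functional f"
  have "f v = f (\<Sum>i\<in>UNIV. v$i *s axis i 1)" by (simp add: basis_expansion)
  also have "\<dots> = (\<Sum>i\<in>UNIV. v$i * f (axis i 1))"
    using f by (simp add: lf_sum lf_scale)
  finally show ?thesis .
qed

lemma lf_eq: "lin_functional f \<Longrightarrow> lin_functional g \<Longrightarrow> (\<And>i. f (axis i 1) = g (axis i 1)) \<Longrightarrow> f = g"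
proof (rule ext)
  fix v
  assume f: "lin_functional f" and g: "lin_functional g" and e: "\<And>i. f (axis i 1) = g (axis i 1)"
  have "f v = (\<Sum>i\<in>UNIV. v$i * f (axis i 1))" by (rule lf_basis[OF f])
  also have "\<dots> = (\<Sum>i\<in>UNIV. v$i * g (axis i 1))" by (simp add: e)
  also have "\<dots> = g v" by (rule lf_basis[OF g, symmetric])
  finally show "f v = g v" .
qed

lemma lm_add: "lin_map f \<Longrightarrow> f (x + y) = f x + f y" by (simp add: lm_iff)
lemma lm_scale: "lin_map f \<Longrightarrow> f (c *s x) = c *s f x" by (simp add: lm_iff)

lemma surj_form:
  fixes B :: "'k::field^'n \<Rightarrow> 'k^'n \<Rightarrow> 'k"
  assumes bf: "bilinear_form B" and nd: "\<forall>x. (\<forall>y. B x y = 0) \<longrightarrow> x = 0"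
    and xi: "lin_functional \<xi>"
  shows "\<exists>x. B x = \<xi>"
proof -
  have l1: "\<And>x. lin_functional (B x)" and l2: "\<And>y. lin_functional (\<lambda>x. B x y)"
    using bf by (auto simp: bilinear_form_def)
  define \<Phi> where "\<Phi> x = (\<chi> i. B x (axis i 1))" for x
  have lin: "Vector_Spaces.linear (*s) (*s) \<Phi>"
    unfolding lm_iff[unfolded lin_map_def] \<Phi>_def
    using lf_add[OF l2] lf_scale[OF l2] by (auto simp: vec_eq_iff)
  have "inj \<Phi>"
  proof (rule injI)
    fix x y assume "\<Phi> x = \<Phi> y"
    then have "\<And>i. B x (axis i 1) = B y (axis i 1)" by (simp add: \<Phi>_def vec_eq_iff)
    then have "B x = B y" using lf_eq[OF l1 l1] by blast
    then have "\<forall>z. B (x - y) z = 0" using lf_diff[OF l2] by simp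
    then show "x = y" using nd by auto
  qed
  then have "surj \<Phi>" using vec.linear_inj_imp_surj[OF lin] by blast
  then obtain x where "\<Phi> x = (\<chi> i. \<xi> (axis i 1))" by (metis surjD)
  then have "\<And>i. B x (axis i 1) = \<xi> (axis i 1)" by (simp add: \<Phi>_def vec_eq_iff)
  then show ?thesis using lf_eq[OF l1 xi] by blast
qed


lemma m_lin:
  assumes "perm_algebra m"
  shows "m (x + y) z = m x z + m y z" "m z (x + y) = m z x + m z y"
    "m (c *s x) z = c *s m x z" "m z (c *s x) = c *s m z x"
proof -
  have a: "lin_map (m z)" and b: "lin_map (\<lambda>x. m x z)"
    using assms unfolding perm_algebra_def bilinear_prod_def by blast+
  show "m (x + y) z = m x z + m y z" using lm_add[OF b] .
  show "m z (x + y) = m z x + m z y" using lm_add[OF a] .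
  show "m (c *s x) z = c *s m x z" using lm_scale[OF b] .
  show "m z (c *s x) = c *s m z x" using lm_scale[OF a] .
qed

lemma transport:
  fixes m :: "'k::field^'n \<Rightarrow> 'k^'n \<Rightarrow> 'k^'n" and N :: "'k^'n \<Rightarrow> 'k^'n"
    and \<psi> :: "'k^'n \<Rightarrow> ('k^'n \<Rightarrow> 'k)"
  assumes pa: "perm_algebra m" and nj: "nijenhuis m N"
    and hadd: "\<forall>x y. \<psi> (x + y) = dual_add (\<psi> x) (\<psi> y)"
    and hsc: "\<forall>c x. \<psi> (c *s x) = dual_scale c (\<psi> x)"
    and bij: "bij_betw \<psi> UNIV dual_space"
    and hop: "\<forall>x y. \<psi> (m x y) = RLstar m x (\<psi> y) \<and> \<psi> (m y x) = Rstar m x (\<psi> y) \<and>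
               \<psi> (N x) = \<alpha> (\<psi> x)"
  shows "nij_perm_rep dual_add dual_scale dual_space m N (RLstar m) (Rstar m) \<alpha>"
proof -
  have W: "dual_space = range \<psi>" using bij by (simp add: bij_betw_def)
  have inj: "inj \<psi>" using bij by (simp add: bij_betw_def)
  have s1: "dual_add (\<psi> x) (\<psi> y) = \<psi> (x + y)" for x y using hadd by simp
  have s2: "dual_scale c (\<psi> x) = \<psi> (c *s x)" for c x using hsc by simp
  have s3: "RLstar m x (\<psi> y) = \<psi> (m x y)" for x y using hop by metis
  have s4: "Rstar m x (\<psi> y) = \<psi> (m y x)" for x y using hop by metis
  have s5: "\<alpha> (\<psi> x) = \<psi> (N x)" for x using hop by metis
  have Nl: "N (x + y) = N x + N y" "N (c *s x) = c *s N x" for x y c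
    using nj lm_add lm_scale unfolding nijenhuis_def by blast+
  have ass: "m (m x y) z = m x (m y z)" "m x (m y z) = m x (m z y)" for x y z
    using pa unfolding perm_algebra_def by blast+
  have nij: "m (N x) (N y) + N (N (m x y)) = N (m (N x) y) + N (m x (N y))" for x y
    using nj unfolding nijenhuis_def by blast
  note simps = s1 s2 s3 s4 s5 inj_eq[OF inj] m_lin[OF pa] Nl
  show ?thesis
    unfolding nij_perm_rep_def perm_rep_def W
    apply (simp add: simps)
    apply (intro conjI allI)
    apply (auto simp: ass)
    apply (metis nij add.commute)+
    done
qed

theorem proposition2p19:
  fixes m :: "'k::field^'n \<Rightarrow> 'k^'n \<Rightarrow> 'k^'n" and N :: "'k^'n \<Rightarrow> 'k^'n"
  assumes "perm_algebra m" and "nijenhuis m N"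
  shows "(\<forall>(B :: 'k^'n \<Rightarrow> 'k^'n \<Rightarrow> 'k) Nh.
            NF_perm_algebra m N B \<and> skew_symmetric B \<and> (\<forall>x y. B (N x) y = B x (Nh y)) \<longrightarrow>
              nij_perm_rep dual_add dual_scale dual_space m N (RLstar m) (Rstar m) (dual_map Nh) \<and>
              equiv_to_adjoint m N Nh)
       \<and> (\<forall>S. lin_map S \<and> admissible m N S \<and> equiv_to_adjoint m N S \<longrightarrow>
              (\<exists>B :: 'k^'n \<Rightarrow> 'k^'n \<Rightarrow> 'k. NF_perm_algebra m N B \<and> (\<forall>x y. B (N x) y = B x (S y))))"
proof (intro conjI allI impI)
  fix B :: "'k^'n \<Rightarrow> 'k^'n \<Rightarrow> 'k" and Nh
  assume h: "NF_perm_algebra m N B \<and> skew_symmetric B \<and> (\<forall>x y. B (N x) y = B x (Nh y))"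
  have bf: "bilinear_form B" and nd: "nondegenerate B" and inv: "invariant_form m B"
    and sk: "skew_symmetric B" and adj: "\<forall>x y. B (N x) y = B x (Nh y)"
    using h unfolding NF_perm_algebra_def by auto
  have l1: "\<And>x. lin_functional (B x)" and l2: "\<And>y. lin_functional (\<lambda>x. B x y)"
    using bf by (auto simp: bilinear_form_def)
  have nd1: "\<forall>x. (\<forall>y. B x y = 0) \<longrightarrow> x = 0" using nd by (simp add: nondegenerate_def)
  have iv: "B (m x y) z = B y (m z x) - B y (m x z)" for x y z
    using inv by (simp add: invariant_form_def)
  have skv: "B x y = - B y x" for x y using sk unfolding skew_symmetric_def by blast
  have hadd: "\<forall>x y. B (x + y) = dual_add (B x) (B y)"
    using lf_add[OF l2] by (auto simp: dual_add_def)
  have hsc: "\<forall>c x. B (c *s x) = dual_scale c (B x)"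
    using lf_scale[OF l2] by (auto simp: dual_scale_def)
  have inj: "inj B"
  proof (rule injI)
    fix x y assume "B x = B y"
    then have "\<forall>z. B (x - y) z = 0" using lf_diff[OF l2] by simp
    then show "x = y" using nd1 by auto
  qed
  have rng: "range B = dual_space"
  proof
    show "range B \<subseteq> dual_space" using l1 by (auto simp: dual_space_def)
    show "dual_space \<subseteq> range B"
    proof
      fix \<xi> :: "'k^'n \<Rightarrow> 'k" assume "\<xi> \<in> dual_space"
      then obtain x where "B x = \<xi>" using surj_form[OF bf nd1] by (auto simp: dual_space_def)
      then show "\<xi> \<in> range B" by blast
    qed
  qed
  have bij: "bij_betw B UNIV dual_space" using inj rng by (simp add: bij_betw_def)
  have r2: "B (m y x) z = B y (m z x)" for x y z
  proof -
    have "B y (m z x) = - B (m z x) y" by (rule skv)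
    also have "\<dots> = B x (m z y) - B x (m y z)" using iv[of z x y] by simp
    also have "\<dots> = B (m y x) z" using iv[of y x z] by simp
    finally show ?thesis by simp
  qed
  have hop: "\<forall>x y. B (m x y) = RLstar m x (B y) \<and> B (m y x) = Rstar m x (B y) \<and>
               B (N x) = dual_map Nh (B x)"
  proof (intro allI conjI)
    fix x y
    show "B (m x y) = RLstar m x (B y)"
      by (rule ext) (simp only: RLstar_def Rstar_def Lstar_def iv)
    show "B (m y x) = Rstar m x (B y)"
      by (rule ext) (simp only: Rstar_def r2)
    show "B (N x) = dual_map Nh (B x)"
      by (rule ext) (simp only: dual_map_def adj)
  qed
  show "nij_perm_rep dual_add dual_scale dual_space m N (RLstar m) (Rstar m) (dual_map Nh)"
    by (rule transport[OF assms hadd hsc bij hop])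
  show "equiv_to_adjoint m N Nh"
    unfolding equiv_to_adjoint_def using hadd hsc bij hop by blast
next
  fix S :: "'k^'n \<Rightarrow> 'k^'n"
  assume h: "lin_map S \<and> admissible m N S \<and> equiv_to_adjoint m N S"
  then obtain \<psi> :: "'k^'n \<Rightarrow> ('k^'n \<Rightarrow> 'k)" where
    hadd: "\<forall>x y. \<psi> (x + y) = dual_add (\<psi> x) (\<psi> y)"
    and hsc: "\<forall>c x. \<psi> (c *s x) = dual_scale c (\<psi> x)"
    and bij: "bij_betw \<psi> UNIV dual_space"
    and hop: "\<forall>x y. \<psi> (m x y) = RLstar m x (\<psi> y) \<and> \<psi> (m y x) = Rstar m x (\<psi> y) \<and>
               \<psi> (N x) = dual_map S (\<psi> x)"
    unfolding equiv_to_adjoint_def by blast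
  have W: "range \<psi> = dual_space" and inj: "inj \<psi>" using bij by (auto simp: bij_betw_def)
  have l1: "lin_functional (\<psi> x)" for x using W by (auto simp: dual_space_def)
  have l2: "lin_functional (\<lambda>x. \<psi> x y)" for y
    unfolding lf_iff using hadd hsc by (simp add: dual_add_def dual_scale_def)
  have bf: "bilinear_form \<psi>" using l1 l2 by (simp add: bilinear_form_def)
  have z0: "\<psi> 0 = (\<lambda>v. 0)" using hsc[rule_format, of 0 0] by (simp add: dual_scale_def)
  have nd: "nondegenerate \<psi>"
    unfolding nondegenerate_def
  proof (intro conjI allI impI)
    fix x assume "\<forall>y. \<psi> x y = 0"
    then have "\<psi> x = \<psi> 0" using z0 by auto
    then show "x = 0" using inj by (simp add: inj_eq)
  next
    fix y :: "'k^'n" assume a: "\<forall>x. \<psi> x y = 0"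
    have "y $ i = 0" for i
    proof -
      have "(\<lambda>v::'k^'n. v $ i) \<in> dual_space" by (simp add: dual_space_def lf_iff)
      then obtain x where "\<psi> x = (\<lambda>v. v $ i)" using W by (metis imageE)
      then show ?thesis using a by metis
    qed
    then show "y = 0" by (simp add: vec_eq_iff)
  qed
  have inv: "invariant_form m \<psi>"
    using hop by (auto simp: invariant_form_def RLstar_def Rstar_def Lstar_def)
  have "NF_perm_algebra m N \<psi>"
    using assms bf nd inv by (simp add: NF_perm_algebra_def)
  moreover have "\<forall>x y. \<psi> (N x) y = \<psi> x (S y)"
    using hop by (simp add: dual_map_def)
  ultimately show "\<exists>B :: 'k^'n \<Rightarrow> 'k^'n \<Rightarrow> 'k. NF_perm_algebra m N B \<and> (\<forall>x y. B (N x) y = B x (S y))"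
    by blast
qed
end
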